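(* For all $n\geq1$ and all formulas $\phi,\chi_1,\dots,\chi_n\in\mathcal{L}(\nabla,\bullet)$, $$\vdash_{\mathbf{K}^{\nabla\bullet}}\Delta\Big(\bigwedge_{k=1}^n\chi_k\to\phi\Big)\land\bigwedge_{k=1}^n\circ(\neg\phi\to\chi_k)\land\phi\to\Delta\phi.$$
   Context: $\mathcal{L}(\nabla,\bullet)$: $\phi::=p\mid\neg\phi\mid\phi\land\phi\mid\nabla\phi\mid\bullet\phi$ over a nonempty set of propositional variables; $\Delta\phi:=\neg\nabla\phi$, $\circ\phi:=\neg\bullet\phi$. The Hilbert system $\mathbf{K}^{\nabla\bullet}$ has axioms: A0 all instances of propositional tautologies; A1 $\bullet\phi\to\phi$; A2 $\nabla\phi\leftrightarrow\nabla\neg\phi$; A3 $\bullet(\psi\to\phi)\land\phi\to\bullet\phi$; A4 $\nabla(\phi\land\psi)\to\nabla\phi\vee\nabla\psi$; A5 $\bullet(\phi\land\psi)\to\bullet\phi\vee\bullet\psi$; A6 $\nabla\phi\to\bullet\phi\vee\bullet\neg\phi$; A7 $\bullet(\phi\to\psi)\land\bullet(\neg\phi\to\chi)\to\nabla\phi$; and rules: R1 from $\phi$ infer $\Delta\phi$; R2 from $\phi$ infer $\circ\phi$; R3 from $\phi\leftrightarrow\psi$ infer $\Delta\phi\leftrightarrow\Delta\psi$; R4 from $\phi\leftrightarrow\psi$ infer $\circ\phi\leftrightarrow\circ\psi$; MP. *)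

theory Defs
  imports Main
begin

datatype 'a fm = Var 'a | Neg "'a fm" | Conj "'a fm" "'a fm" | Nab "'a fm" | Bul "'a fm"

definition Disj :: "'a fm \<Rightarrow> 'a fm \<Rightarrow> 'a fm" where
  "Disj p q = Neg (Conj (Neg p) (Neg q))"
definition Imp :: "'a fm \<Rightarrow> 'a fm \<Rightarrow> 'a fm" where
  "Imp p q = Neg (Conj p (Neg q))"
definition Iff :: "'a fm \<Rightarrow> 'a fm \<Rightarrow> 'a fm" where
  "Iff p q = Conj (Imp p q) (Imp q p)"
definition Delta :: "'a fm \<Rightarrow> 'a fm" where
  "Delta p = Neg (Nab p)"
definition Circ :: "'a fm \<Rightarrow> 'a fm" where
  "Circ p = Neg (Bul p)"

fun peval :: "('a fm \<Rightarrow> bool) \<Rightarrow> 'a fm \<Rightarrow> bool" where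
  "peval v (Var p) = v (Var p)"
| "peval v (Neg f) = (\<not> peval v f)"
| "peval v (Conj f g) = (peval v f \<and> peval v g)"
| "peval v (Nab f) = v (Nab f)"
| "peval v (Bul f) = v (Bul f)"

definition taut :: "'a fm \<Rightarrow> bool" where
  "taut f = (\<forall>v. peval v f)"

inductive deriv :: "'a fm \<Rightarrow> bool" where
  A0: "taut f \<Longrightarrow> deriv f"
| A1: "deriv (Imp (Bul f) f)"
| A2: "deriv (Iff (Nab f) (Nab (Neg f)))"
| A3: "deriv (Imp (Conj (Bul (Imp g f)) f) (Bul f))"
| A4: "deriv (Imp (Nab (Conj f g)) (Disj (Nab f) (Nab g)))"
| A5: "deriv (Imp (Bul (Conj f g)) (Disj (Bul f) (Bul g)))"
| A6: "deriv (Imp (Nab f) (Disj (Bul f) (Bul (Neg f))))"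
| A7: "deriv (Imp (Conj (Bul (Imp f g)) (Bul (Imp (Neg f) h))) (Nab f))"
| R1: "deriv f \<Longrightarrow> deriv (Delta f)"
| R2: "deriv f \<Longrightarrow> deriv (Circ f)"
| R3: "deriv (Iff f g) \<Longrightarrow> deriv (Iff (Delta f) (Delta g))"
| R4: "deriv (Iff f g) \<Longrightarrow> deriv (Iff (Circ f) (Circ g))"
| MP: "deriv f \<Longrightarrow> deriv (Imp f g) \<Longrightarrow> deriv g"

fun BigConj :: "'a fm list \<Rightarrow> 'a fm" where
  "BigConj [x] = x"
| "BigConj (x # xs) = Conj x (BigConj xs)"
| "BigConj [] = Neg (Conj (Var undefined) (Neg (Var undefined)))"

end

theory Submission
  imports Defs
begin

lemmas defs = taut_def Imp_def Iff_def Disj_def Delta_def Circ_def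

lemma mp1: "deriv a \<Longrightarrow> taut (Imp a c) \<Longrightarrow> deriv c"
  using deriv.A0 deriv.MP by blast

lemma mp2: "deriv a \<Longrightarrow> deriv b \<Longrightarrow> taut (Imp a (Imp b c)) \<Longrightarrow> deriv c"
  using deriv.A0 deriv.MP by blast

lemma mp4: "deriv a \<Longrightarrow> deriv b \<Longrightarrow> deriv d \<Longrightarrow> deriv e
   \<Longrightarrow> taut (Imp a (Imp b (Imp d (Imp e c)))) \<Longrightarrow> deriv c"
  using deriv.A0 deriv.MP by blast

lemma Bul_cong: "taut (Iff f g) \<Longrightarrow> deriv (Iff (Bul f) (Bul g))"
proof -
  assume "taut (Iff f g)"
  hence "deriv (Iff (Circ f) (Circ g))" by (intro deriv.R4 deriv.A0)
  then show ?thesis by (rule mp1) (auto simp: defs)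
qed

lemma Nab_cong: "taut (Iff f g) \<Longrightarrow> deriv (Iff (Nab f) (Nab g))"
proof -
  assume "taut (Iff f g)"
  hence "deriv (Iff (Delta f) (Delta g))" by (intro deriv.R3 deriv.A0)
  then show ?thesis by (rule mp1) (auto simp: defs)
qed

lemma bigbul:
  "chis \<noteq> [] \<Longrightarrow> deriv (Imp (Bul (Imp (Neg phi) (BigConj chis)))
                         (Neg (BigConj (map (\<lambda>c. Circ (Imp (Neg phi) c)) chis))))"
proof (induction chis rule: BigConj.induct)
  case (1 x)
  show ?case by (rule deriv.A0) (auto simp: defs)
next
  case (2 x y zs)
  let ?B = "BigConj (y # zs)"
  have ih: "deriv (Imp (Bul (Imp (Neg phi) ?B))
                         (Neg (BigConj (map (\<lambda>c. Circ (Imp (Neg phi) c)) (y#zs)))))"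
    using 2 by simp
  have c: "deriv (Iff (Bul (Imp (Neg phi) (Conj x ?B)))
                      (Bul (Conj (Imp (Neg phi) x) (Imp (Neg phi) ?B))))"
    by (rule Bul_cong) (auto simp: defs)
  have a5: "deriv (Imp (Bul (Conj (Imp (Neg phi) x) (Imp (Neg phi) ?B)))
             (Disj (Bul (Imp (Neg phi) x)) (Bul (Imp (Neg phi) ?B))))"
    by (rule deriv.A5)
  have e: "BigConj (map (\<lambda>c. Circ (Imp (Neg phi) c)) (x#y#zs)) =
     Conj (Circ (Imp (Neg phi) x)) (BigConj (map (\<lambda>c. Circ (Imp (Neg phi) c)) (y#zs)))"
    by simp
  show ?case unfolding e by (rule mp4[OF ih c a5 ih]) (auto simp: defs)
next
  case 3
  then show ?case by simp
qed

theorem proposition8: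
  fixes phi :: "'a fm" and chis :: "'a fm list"
  assumes "length chis \<ge> 1"
  shows "deriv (Imp (Conj (Conj (Delta (Imp (BigConj chis) phi))
                               (BigConj (map (\<lambda>c. Circ (Imp (Neg phi) c)) chis)))
                         phi)
                   (Delta phi))"
proof -
  let ?X = "BigConj chis"
  let ?C = "BigConj (map (\<lambda>c. Circ (Imp (Neg phi) c)) chis)"
  have ne: "chis \<noteq> []" using assms by auto
  have c: "deriv (Iff (Nab phi) (Nab (Conj (Imp ?X phi) (Imp (Neg phi) ?X))))"
    by (rule Nab_cong) (auto simp: defs)
  have a4: "deriv (Imp (Nab (Conj (Imp ?X phi) (Imp (Neg phi) ?X)))
               (Disj (Nab (Imp ?X phi)) (Nab (Imp (Neg phi) ?X))))"
    by (rule deriv.A4)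
  have h1: "deriv (Imp (Nab phi) (Disj (Nab (Imp ?X phi)) (Nab (Imp (Neg phi) ?X))))"
    by (rule mp2[OF c a4]) (auto simp: defs)
  have h2: "deriv (Imp (Nab (Imp (Neg phi) ?X))
      (Disj (Bul (Imp (Neg phi) ?X)) (Bul (Neg (Imp (Neg phi) ?X)))))"
    by (rule deriv.A6)
  have h3: "deriv (Imp (Bul (Neg (Imp (Neg phi) ?X))) (Neg (Imp (Neg phi) ?X)))"
    by (rule deriv.A1)
  have h4: "deriv (Imp (Bul (Imp (Neg phi) ?X)) (Neg ?C))"
    using bigbul[OF ne] .
  show ?thesis by (rule mp4[OF h1 h2 h3 h4]) (auto simp: defs)
qed

end
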